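(* Let $1\leq p<q$ be integers and let $G=\langle a,t\mid ta^pt^{-1}=a^q\rangle$ be the Baumslag--Solitar group $BS(p,q)$. Every element $x\in G$ can be written uniquely as $x=w(a,t)a^N$, where $N\in\mathbb Z$ and $w(a,t)$ is a freely reduced word belonging to $\{t,at,\ldots,a^{q-1}t,\,t^{-1},at^{-1},\ldots,a^{p-1}t^{-1}\}^*$. There exist constants $C_1,C_2,D_1,D_2>0$ such that for every $x\in G$ with this normal form $x=w(a,t)a^N$, $$C_1\bigl(|w|+\log(|N|+1)\bigr)-D_1\leq \|x\|\leq C_2\bigl(|w|+\log(|N|+1)\bigr)+D_2,$$ where $|w|$ is the number of letters of $w$ as a word over $\{a^{\pm1},t^{\pm1}\}$ and $\|x\|$ is the word length of $x$ with respect to the generating set $\{a,t\}$.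
   Context: $X^*$ denotes the set of finite concatenations of words from $X$. The base of the logarithm is any fixed base greater than $1$. *)

theory Defs
  imports Complex_Main
begin

datatype letter = La | LaInv | Lt | LtInv

fun inv_letter :: "letter \<Rightarrow> letter" where
  "inv_letter La = LaInv"
| "inv_letter LaInv = La"
| "inv_letter Lt = LtInv"
| "inv_letter LtInv = Lt"

type_synonym word = "letter list"

definition bs_rules :: "nat \<Rightarrow> nat \<Rightarrow> (word \<times> word) set" where
  "bs_rules p q = {([g, inv_letter g], []) | g. True}
     \<union> {([Lt] @ replicate p La @ [LtInv], replicate q La)}"

definition bs_step :: "nat \<Rightarrow> nat \<Rightarrow> word \<Rightarrow> word \<Rightarrow> bool" where
  "bs_step p q u v \<longleftrightarrow> (\<exists>x y l r. (l, r) \<in> bs_rules p q \<and> u = x @ l @ y \<and> v = x @ r @ y)"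

definition bs_eq :: "nat \<Rightarrow> nat \<Rightarrow> word \<Rightarrow> word \<Rightarrow> bool" where
  "bs_eq p q = equivclp (bs_step p q)"

definition bs_norm :: "nat \<Rightarrow> nat \<Rightarrow> word \<Rightarrow> nat" where
  "bs_norm p q u = (LEAST n. \<exists>v. length v = n \<and> bs_eq p q u v)"

definition apow :: "int \<Rightarrow> word" where
  "apow N = (if N \<ge> 0 then replicate (nat N) La else replicate (nat (- N)) LaInv)"

text \<open>A block a^k t (0 \<le> k < q) or a^k t^-1 (0 \<le> k < p); encoded as (k, True) / (k, False).\<close>

definition block_word :: "nat \<times> bool \<Rightarrow> word" where
  "block_word b = replicate (fst b) La @ [if snd b then Lt else LtInv]"

definition valid_block :: "nat \<Rightarrow> nat \<Rightarrow> nat \<times> bool \<Rightarrow> bool" where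
  "valid_block p q b \<longleftrightarrow> (if snd b then fst b < q else fst b < p)"

definition freely_reduced :: "word \<Rightarrow> bool" where
  "freely_reduced w \<longleftrightarrow> (\<forall>i. Suc i < length w \<longrightarrow> w ! Suc i \<noteq> inv_letter (w ! i))"

definition nf_word :: "nat \<Rightarrow> nat \<Rightarrow> word \<Rightarrow> bool" where
  "nf_word p q w \<longleftrightarrow> (\<exists>bs. (\<forall>b\<in>set bs. valid_block p q b) \<and> w = concat (map block_word bs))
                      \<and> freely_reduced w"

end

theory Submission
  imports Defs
begin


lemma bs_step_ctx: "bs_step p q u v \<Longrightarrow> bs_step p q (a@u@b) (a@v@b)"
proof -
  assume "bs_step p q u v"
  then obtain x y l r where h: "(l, r) \<in> bs_rules p q" "u = x @ l @ y" "v = x @ r @ y"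
    unfolding bs_step_def by blast
  show ?thesis unfolding bs_step_def
    by (rule exI[of _ "a@x"], rule exI[of _ "y@b"], rule exI[of _ l], rule exI[of _ r]) (simp add: h)
qed

lemma bs_eq_refl[simp]: "bs_eq p q u u" by (simp add: bs_eq_def)
lemma bs_eq_sym: "bs_eq p q u v \<Longrightarrow> bs_eq p q v u" by (simp add: bs_eq_def equivclp_sym)
lemma bs_eq_trans[trans]: "bs_eq p q u v \<Longrightarrow> bs_eq p q v w \<Longrightarrow> bs_eq p q u w"
  unfolding bs_eq_def by (rule equivclp_trans)
lemma bs_step_eq: "bs_step p q u v \<Longrightarrow> bs_eq p q u v"
  unfolding bs_eq_def equivclp_def by (rule r_into_rtranclp) (simp add: symclp_def)

lemma bs_eq_ctx: "bs_eq p q u v \<Longrightarrow> bs_eq p q (a@u@b) (a@v@b)"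
  unfolding bs_eq_def
proof (induction rule: equivclp_induct)
  case base
  then show ?case by simp
next
  case (step y z)
  have h: "bs_eq p q (a@y@b) (a@z@b)"
    using step(2) bs_step_ctx bs_step_eq bs_eq_sym by blast
  show ?case using equivclp_trans[OF step(3) h[unfolded bs_eq_def]] .
qed

lemma bs_eq_rule: "(l, r) \<in> bs_rules p q \<Longrightarrow> bs_eq p q l r"
  unfolding bs_eq_def equivclp_def
  by (rule r_into_rtranclp, unfold symclp_def bs_step_def, rule disjI1,
      rule exI[of _ "[]"], rule exI[of _ "[]"], rule exI[of _ l], rule exI[of _ r]) simp

lemma bs_eq_cancel: "bs_eq p q [g, inv_letter g] []"
  by (rule bs_eq_rule) (unfold bs_rules_def, blast)

lemma bs_eq_rel: "bs_eq p q ([Lt] @ replicate p La @ [LtInv]) (replicate q La)"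
  by (rule bs_eq_rule) (unfold bs_rules_def, blast)

lemma bs_eq_app: "bs_eq p q u v \<Longrightarrow> bs_eq p q u' v' \<Longrightarrow> bs_eq p q (u@u') (v@v')"
proof -
  assume a: "bs_eq p q u v" "bs_eq p q u' v'"
  have 1: "bs_eq p q (u@u') (v@u')" using bs_eq_ctx[OF a(1), of "[]" u'] by simp
  have 2: "bs_eq p q (v@u') (v@v')" using bs_eq_ctx[OF a(2), of v "[]"] by simp
  show ?thesis using bs_eq_trans[OF 1 2] .
qed

lemma apow_nat: "apow (int n) = replicate n La" by (simp add: apow_def)
lemma apow_neg_nat: "apow (- int n) = replicate n LaInv" by (cases n) (simp_all add: apow_def flip: of_nat_Suc)
lemma apow_Suc1: "apow (int n + 1) = replicate n La @ [La]"
proof -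
  have e: "int n + 1 = int (Suc n)" by simp
  show ?thesis unfolding e apow_nat by (simp add: replicate_append_same)
qed
lemma apow_Suc2: "apow (1 + int n) = replicate n La @ [La]"
proof -
  have e: "1 + int n = int n + 1" by simp
  show ?thesis unfolding e by (rule apow_Suc1)
qed
lemma apow_negSuc: "apow (- int n - 1) = replicate n LaInv @ [LaInv]"
proof -
  have e: "- int n - 1 = - int (Suc n)" by simp
  show ?thesis unfolding e apow_neg_nat by (simp add: replicate_append_same)
qed
lemma apow_negSuc2: "apow (- 1 - int n) = replicate n LaInv @ [LaInv]"
proof -
  have e: "- 1 - int n = - int n - 1" by simp
  show ?thesis unfolding e by (rule apow_negSuc)
qed

lemma bs_eq_snoc: "bs_eq p q u v \<Longrightarrow> bs_eq p q (u @ x) (v @ x)"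
  using bs_eq_app[of p q u v x x] by simp
lemma bs_eq_cons: "bs_eq p q u v \<Longrightarrow> bs_eq p q (x @ u) (x @ v)"
  using bs_eq_app[of p q x x u v] by simp

lemma apow_snoc_La: "bs_eq p q (apow N @ [La]) (apow (N+1))"
proof (cases "N \<ge> 0")
  case True
  then obtain n where "N = int n" by (metis nonneg_int_cases)
  then show ?thesis by (simp add: apow_nat apow_Suc1)
next
  case False
  have "N = - int (Suc (nat (-N) - 1))" using False by simp
  then obtain n where n: "N = - int (Suc n)" by blast
  have "apow N @ [La] = replicate n LaInv @ [LaInv, La]"
    unfolding n apow_neg_nat by (induct n) auto
  also have "bs_eq p q \<dots> (replicate n LaInv @ [])"
    using bs_eq_cons[OF bs_eq_cancel[of p q LaInv]] by simp
  moreover have "N + 1 = - int n" using n by simp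
  ultimately show ?thesis using apow_neg_nat[of n] by simp
qed

lemma apow_snoc_LaInv: "bs_eq p q (apow N @ [LaInv]) (apow (N-1))"
proof (cases "N \<le> 0")
  case True
  have "N = - int (nat (-N))" using True by simp
  then obtain n where "N = - int n" by blast
  then show ?thesis 
    by (simp add: apow_neg_nat apow_negSuc)
next
  case False
  have "N = int (Suc (nat N - 1))" using False by simp
  then obtain n where n: "N = int (Suc n)" by blast
  have "apow N @ [LaInv] = replicate n La @ [La, LaInv]"
    unfolding n apow_nat by (induct n) auto
  also have "bs_eq p q \<dots> (replicate n La @ [])"
    using bs_eq_cons[OF bs_eq_cancel[of p q La]] by simp
  moreover have "N - 1 = int n" using n by simp
  ultimately show ?thesis using apow_nat[of n] by simp
qed

lemma apow_add: "bs_eq p q (apow M @ apow N) (apow (M+N))"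
proof (cases "N \<ge> 0")
  case True
  then obtain n where n: "N = int n" by (metis nonneg_int_cases)
  have "bs_eq p q (apow M @ apow (int n)) (apow (M + int n))"
  proof (induction n)
    case 0 then show ?case by (simp add: apow_def)
  next
    case (Suc n)
    have "apow M @ apow (int (Suc n)) = (apow M @ apow (int n)) @ [La]"
      by (simp add: apow_nat apow_Suc2)
    also have "bs_eq p q \<dots> (apow (M + int n) @ [La])" by (rule bs_eq_snoc[OF Suc])
    also have "bs_eq p q \<dots> (apow (M + int (Suc n)))" using apow_snoc_La[of p q "M + int n"]
      by (simp add: algebra_simps)
    finally show ?case .
  qed
  then show ?thesis using n by simp
next
  case False
  have "N = - int (nat (-N))" using False by simp
  then obtain n where n: "N = - int n" by blast
  have "bs_eq p q (apow M @ apow (- int n)) (apow (M - int n))"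
  proof (induction n)
    case 0 then show ?case by (simp add: apow_def)
  next
    case (Suc n)
    have "apow M @ apow (- int (Suc n)) = (apow M @ apow (- int n)) @ [LaInv]"
      by (simp add: apow_neg_nat apow_negSuc2)
    also have "bs_eq p q \<dots> (apow (M - int n) @ [LaInv])" by (rule bs_eq_snoc[OF Suc])
    also have "bs_eq p q \<dots> (apow (M - int (Suc n)))" using apow_snoc_LaInv[of p q "M - int n"]
      by (simp add: algebra_simps)
    finally show ?case .
  qed
  then show ?thesis using n by simp
qed

lemma apow_comm_gen:
  assumes h: "bs_eq p q (apow a @ [x]) ([x] @ apow b)"
  shows "bs_eq p q (apow (m*a) @ [x]) ([x] @ apow (m*b))"
proof -
  have hneg: "bs_eq p q (apow (-a) @ [x]) ([x] @ apow (-b))"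
  proof -
    have "bs_eq p q (apow (-a) @ [x]) (apow (-a) @ [x] @ apow (b + -b))"
      by (simp add: apow_def)
    also have "bs_eq p q \<dots> (apow (-a) @ [x] @ apow b @ apow (-b))"
      using bs_eq_cons[OF bs_eq_sym[OF apow_add[of p q b "-b"]], of "apow (-a) @ [x]"] by simp
    also have "bs_eq p q \<dots> (apow (-a) @ apow a @ [x] @ apow (-b))"
      using bs_eq_ctx[OF bs_eq_sym[OF h], of "apow (-a)" "apow (-b)"] by simp
    also have "bs_eq p q \<dots> (apow (-a + a) @ [x] @ apow (-b))"
      using bs_eq_snoc[OF apow_add[of p q "-a" a], of "[x] @ apow (-b)"] by simp
    finally show ?thesis by (simp add: apow_def)
  qed
  show ?thesis
  proof (induction m rule: int_induct[where k=0])
    case base then show ?case by (simp add: apow_def)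
  next
    case (step1 i)
    have "bs_eq p q (apow ((i+1)*a) @ [x]) (apow a @ apow (i*a) @ [x])"
      using bs_eq_snoc[OF bs_eq_sym[OF apow_add[of p q a "i*a"]], of "[x]"] by (simp add: algebra_simps)
    also have "bs_eq p q \<dots> (apow a @ [x] @ apow (i*b))"
      using bs_eq_cons[OF step1(2), of "apow a"] by simp
    also have "bs_eq p q \<dots> ([x] @ apow b @ apow (i*b))"
      using bs_eq_snoc[OF h, of "apow (i*b)"] by simp
    also have "bs_eq p q \<dots> ([x] @ apow ((i+1)*b))"
      using bs_eq_cons[OF apow_add[of p q b "i*b"], of "[x]"] by (simp add: algebra_simps)
    finally show ?case .
  next
    case (step2 i)
    have "bs_eq p q (apow ((i-1)*a) @ [x]) (apow (-a) @ apow (i*a) @ [x])"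
      using bs_eq_snoc[OF bs_eq_sym[OF apow_add[of p q "-a" "i*a"]], of "[x]"] by (simp add: algebra_simps)
    also have "bs_eq p q \<dots> (apow (-a) @ [x] @ apow (i*b))"
      using bs_eq_cons[OF step2(2), of "apow (-a)"] by simp
    also have "bs_eq p q \<dots> ([x] @ apow (-b) @ apow (i*b))"
      using bs_eq_snoc[OF hneg, of "apow (i*b)"] by simp
    also have "bs_eq p q \<dots> ([x] @ apow ((i-1)*b))"
      using bs_eq_cons[OF apow_add[of p q "-b" "i*b"], of "[x]"] by (simp add: algebra_simps)
    finally show ?case .
  qed
qed

lemma comm_t: "bs_eq p q (apow (m * int q) @ [Lt]) ([Lt] @ apow (m * int p))"
proof (rule apow_comm_gen)
  have "apow (int q) @ [Lt] = replicate q La @ [Lt]" by (simp add: apow_nat)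
  also have "bs_eq p q \<dots> (([Lt] @ replicate p La @ [LtInv]) @ [Lt])"
    by (rule bs_eq_snoc[OF bs_eq_sym[OF bs_eq_rel]])
  also have "\<dots> = ([Lt] @ replicate p La) @ [LtInv, Lt] @ []" by simp
  also have "bs_eq p q \<dots> (([Lt] @ replicate p La) @ [] @ [])"
    by (rule bs_eq_ctx) (rule bs_eq_cancel[of p q LtInv, simplified])
  finally show "bs_eq p q (apow (int q) @ [Lt]) ([Lt] @ apow (int p))" by (simp add: apow_nat)
qed

lemma comm_tinv: "bs_eq p q (apow (m * int p) @ [LtInv]) ([LtInv] @ apow (m * int q))"
proof (rule apow_comm_gen)
  have "apow (int p) @ [LtInv] = [] @ replicate p La @ [LtInv]" by (simp add: apow_nat)
  also have "bs_eq p q \<dots> ([LtInv, Lt] @ replicate p La @ [LtInv])"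
    by (rule bs_eq_snoc[OF bs_eq_sym[OF bs_eq_cancel[of p q LtInv, simplified]]])
  also have "\<dots> = [LtInv] @ ([Lt] @ replicate p La @ [LtInv]) @ []" by simp
  also have "bs_eq p q \<dots> ([LtInv] @ replicate q La @ [])"
    by (rule bs_eq_ctx[OF bs_eq_rel])
  finally show "bs_eq p q (apow (int p) @ [LtInv]) ([LtInv] @ apow (int q))" by (simp add: apow_nat)
qed




type_synonym state = "(nat \<times> bool) list \<times> int"

definition Rb :: "nat \<times> bool \<Rightarrow> nat \<times> bool \<Rightarrow> bool" where
  "Rb b c \<longleftrightarrow> snd b = snd c \<or> fst c \<noteq> 0"

definition valid_st :: "nat \<Rightarrow> nat \<Rightarrow> (nat \<times> bool) list \<Rightarrow> bool" where
  "valid_st p q bs \<longleftrightarrow> (\<forall>b\<in>set bs. valid_block p q b) \<and> successively Rb bs"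

fun act :: "nat \<Rightarrow> nat \<Rightarrow> letter \<Rightarrow> state \<Rightarrow> state" where
  "act p q La (bs,N) = (bs, N+1)"
| "act p q LaInv (bs,N) = (bs, N-1)"
| "act p q Lt (bs,N) = (if N mod int q = 0 \<and> bs \<noteq> [] \<and> \<not> snd (last bs)
     then (butlast bs, int (fst (last bs)) + N div int q * int p)
     else (bs @ [(nat (N mod int q), True)], N div int q * int p))"
| "act p q LtInv (bs,N) = (if N mod int p = 0 \<and> bs \<noteq> [] \<and> snd (last bs)
     then (butlast bs, int (fst (last bs)) + N div int p * int q)
     else (bs @ [(nat (N mod int p), False)], N div int p * int q))"

lemma valid_snoc: "valid_st p q (bs @ [b]) \<longleftrightarrow> valid_st p q bs \<and> valid_block p q b \<and> (bs = [] \<or> Rb (last bs) b)"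
  unfolding valid_st_def by (auto simp: successively_append_iff)

lemma valid_Nil[simp]: "valid_st p q []" by (simp add: valid_st_def)

lemma modl: "0 < (P::int) \<Longrightarrow> 0 \<le> k \<Longrightarrow> k < P \<Longrightarrow> (k + m * P) mod P = k"
  by simp
lemma divl: "0 < (P::int) \<Longrightarrow> 0 \<le> k \<Longrightarrow> k < P \<Longrightarrow> (k + m * P) div P = m"
  by simp

lemma act_fold_La: "fold (act p q) (replicate n La) (bs, N) = (bs, N + int n)"
  by (induction n arbitrary: N) (auto simp: algebra_simps)

context
  fixes p q :: nat
  assumes p1: "1 \<le> p" and pq: "p < q"
begin

lemma pq_pos: "(0::int) < int p" "(0::int) < int q" using p1 pq by auto

lemma act_valid: "valid_st p q bs \<Longrightarrow> valid_st p q (fst (act p q g (bs, N)))"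
proof (cases g)
  case Lt
  assume v: "valid_st p q bs"
  show ?thesis
  proof (cases "N mod int q = 0 \<and> bs \<noteq> [] \<and> \<not> snd (last bs)")
    case True
    then obtain bs' b where "bs = bs' @ [b]" by (metis rev_exhaust)
    then show ?thesis using v True Lt by (simp add: valid_snoc)
  next
    case False
    have a: "0 \<le> N mod int q" using pq_pos by simp
    have "nat (N mod int q) < q" using pq_pos by (simp add: nat_less_iff)
    moreover have "nat (N mod int q) = 0 \<longleftrightarrow> N mod int q = 0" using a by arith
    ultimately show ?thesis using v False Lt by (auto simp: valid_snoc valid_block_def Rb_def)
  qed
next
  case LtInv
  assume v: "valid_st p q bs"
  show ?thesis
  proof (cases "N mod int p = 0 \<and> bs \<noteq> [] \<and> snd (last bs)")
    case True
    then obtain bs' b where "bs = bs' @ [b]" by (metis rev_exhaust)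
    then show ?thesis using v True LtInv by (simp add: valid_snoc)
  next
    case False
    have a: "0 \<le> N mod int p" using pq_pos by simp
    have "nat (N mod int p) < p" using pq_pos by (simp add: nat_less_iff)
    moreover have "nat (N mod int p) = 0 \<longleftrightarrow> N mod int p = 0" using a by arith
    ultimately show ?thesis using v False LtInv by (auto simp: valid_snoc valid_block_def Rb_def)
  qed
qed auto

lemma act_inv: "valid_st p q bs \<Longrightarrow> act p q (inv_letter g) (act p q g (bs, N)) = (bs, N)"
proof (cases g)
  case Lt
  assume v: "valid_st p q bs"
  define m where "m = N div int q"
  define r where "r = N mod int q"
  have Nd: "N = r + m * int q" unfolding m_def r_def by simp
  have r0: "0 \<le> r" "r < int q" unfolding r_def using pq_pos by auto
  show ?thesis
  proof (cases "r = 0 \<and> bs \<noteq> [] \<and> \<not> snd (last bs)")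
    case True
    from True obtain bs' b where bs0: "bs = bs' @ [b]" by (cases bs rule: rev_exhaust) auto
    obtain k where bs: "bs = bs' @ [(k, False)]" using bs0 True by (cases b) auto
    have k: "int k < int p" using v bs by (simp add: valid_snoc valid_block_def)
    have c: "\<not> (k = 0 \<and> bs' \<noteq> [] \<and> snd (last bs'))" using v bs by (auto simp: valid_snoc Rb_def)
    have e1: "act p q g (bs, N) = (bs', int k + m * int p)"
      using True Lt bs unfolding m_def r_def by simp
    have md: "(int k + m * int p) mod int p = int k" "(int k + m * int p) div int p = m"
      using modl[OF pq_pos(1), of "int k"] divl[OF pq_pos(1), of "int k"] k by auto
    have "act p q (inv_letter g) (act p q g (bs, N)) = act p q LtInv (bs', int k + m * int p)"
      using e1 Lt by simp
    also have "\<dots> = (bs' @ [(k, False)], m * int q)"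
    proof -
      have cond: "(int k = 0 \<and> bs' \<noteq> [] \<and> snd (last bs')) = False" using c by simp
      show ?thesis by (simp only: act.simps md cond if_False nat_int simp_thms)
    qed
    also have "\<dots> = (bs, N)" using bs Nd True by simp
    finally show ?thesis .
  next
    case False
    have e1: "act p q g (bs, N) = (bs @ [(nat r, True)], m * int p)"
      using False Lt unfolding m_def r_def by auto
    have md: "(m * int p) mod int p = 0" "(m * int p) div int p = m" using pq_pos by auto
    have "act p q (inv_letter g) (act p q g (bs, N)) = act p q LtInv (bs @ [(nat r, True)], m * int p)"
      using e1 Lt by simp
    also have "\<dots> = (bs, int (nat r) + m * int q)"
    proof -
      have cond: "(0 = (0::int) \<and> bs @ [(nat r, True)] \<noteq> [] \<and> snd (last (bs @ [(nat r, True)]))) = True" by simp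
      show ?thesis by (simp only: act.simps md) simp
    qed
    also have "\<dots> = (bs, N)" using Nd r0 by simp
    finally show ?thesis .
  qed
next
  case LtInv
  assume v: "valid_st p q bs"
  define m where "m = N div int p"
  define r where "r = N mod int p"
  have Nd: "N = r + m * int p" unfolding m_def r_def by simp
  have r0: "0 \<le> r" "r < int p" unfolding r_def using pq_pos by auto
  show ?thesis
  proof (cases "r = 0 \<and> bs \<noteq> [] \<and> snd (last bs)")
    case True
    from True obtain bs' b where bs0: "bs = bs' @ [b]" by (cases bs rule: rev_exhaust) auto
    obtain k where bs: "bs = bs' @ [(k, True)]" using bs0 True by (cases b) auto
    have k: "int k < int q" using v bs by (simp add: valid_snoc valid_block_def)
    have c: "\<not> (k = 0 \<and> bs' \<noteq> [] \<and> \<not> snd (last bs'))" using v bs by (auto simp: valid_snoc Rb_def)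
    have e1: "act p q g (bs, N) = (bs', int k + m * int q)"
      using True LtInv bs unfolding m_def r_def by simp
    have md: "(int k + m * int q) mod int q = int k" "(int k + m * int q) div int q = m"
      using modl[OF pq_pos(2), of "int k"] divl[OF pq_pos(2), of "int k"] k by auto
    have "act p q (inv_letter g) (act p q g (bs, N)) = act p q Lt (bs', int k + m * int q)"
      using e1 LtInv by simp
    also have "\<dots> = (bs' @ [(k, True)], m * int p)"
    proof -
      have cond: "(int k = 0 \<and> bs' \<noteq> [] \<and> \<not> snd (last bs')) = False" using c by simp
      show ?thesis by (simp only: act.simps md cond if_False nat_int simp_thms)
    qed
    also have "\<dots> = (bs, N)" using bs Nd True by simp
    finally show ?thesis .
  next
    case False
    have e1: "act p q g (bs, N) = (bs @ [(nat r, False)], m * int q)"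
      using False LtInv unfolding m_def r_def by auto
    have md: "(m * int q) mod int q = 0" "(m * int q) div int q = m" using pq_pos by auto
    have "act p q (inv_letter g) (act p q g (bs, N)) = act p q Lt (bs @ [(nat r, False)], m * int q)"
      using e1 LtInv by simp
    also have "\<dots> = (bs, int (nat r) + m * int p)"
    proof -
      have cond: "(0 = (0::int) \<and> bs @ [(nat r, False)] \<noteq> [] \<and> \<not> snd (last (bs @ [(nat r, False)]))) = True" by simp
      show ?thesis by (simp only: act.simps md) simp
    qed
    also have "\<dots> = (bs, N)" using Nd r0 by simp
    finally show ?thesis .
  qed
qed auto

end



declare fold_replicate[simp del]

lemma act_fold_LaInv: "fold (act p q) (replicate n LaInv) (bs, N) = (bs, N - int n)"
  by (induction n arbitrary: N) (auto simp: algebra_simps)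

lemma fold_apow: "fold (act p q) (apow N) (bs, M) = (bs, M + N)"
  by (simp add: apow_def act_fold_La act_fold_LaInv)

context
  fixes p q :: nat
  assumes p1: "1 \<le> p" and pq: "p < q"
begin

lemma pq_pos': "(0::int) < int p" "(0::int) < int q" using p1 pq by auto

lemma act_rel: "valid_st p q bs \<Longrightarrow>
   fold (act p q) ([Lt] @ replicate p La @ [LtInv]) (bs, N) = fold (act p q) (replicate q La) (bs, N)"
proof -
  assume v: "valid_st p q bs"
  define m where "m = N div int q"
  define r where "r = N mod int q"
  have Nd: "N = r + m * int q" unfolding m_def r_def by simp
  have r0: "0 \<le> r" "r < int q" unfolding r_def using pq_pos' by auto
  have L: "fold (act p q) ([Lt] @ replicate p La @ [LtInv]) (bs, N)
      = act p q LtInv (fold (act p q) (replicate p La) (act p q Lt (bs, N)))" by simp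
  have R: "fold (act p q) (replicate q La) (bs, N) = (bs, N + int q)" by (rule act_fold_La)
  show ?thesis
  proof (cases "r = 0 \<and> bs \<noteq> [] \<and> \<not> snd (last bs)")
    case True
    from True obtain bs' b where bs0: "bs = bs' @ [b]" by (cases bs rule: rev_exhaust) auto
    obtain k where bs: "bs = bs' @ [(k, False)]" using bs0 True by (cases b) auto
    have k: "int k < int p" using v bs by (simp add: valid_snoc valid_block_def)
    have c: "\<not> (k = 0 \<and> bs' \<noteq> [] \<and> snd (last bs'))" using v bs by (auto simp: valid_snoc Rb_def)
    have e1: "act p q Lt (bs, N) = (bs', int k + m * int p)"
      using True bs unfolding m_def r_def by simp
    have e2: "fold (act p q) (replicate p La) (bs', int k + m * int p) = (bs', int k + (m+1) * int p)"
      by (simp add: act_fold_La algebra_simps)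
    have md: "(int k + (m+1) * int p) mod int p = int k" "(int k + (m+1) * int p) div int p = m+1"
      using modl[OF pq_pos'(1), of "int k"] divl[OF pq_pos'(1), of "int k"] k by auto
    have e3: "act p q LtInv (bs', int k + (m+1) * int p) = (bs' @ [(k, False)], (m+1) * int q)"
    proof -
      have cond: "(int k = 0 \<and> bs' \<noteq> [] \<and> snd (last bs')) = False" using c by simp
      show ?thesis by (simp only: act.simps md cond if_False nat_int simp_thms)
    qed
    show ?thesis unfolding L R e1 e2 e3 using bs Nd True by (simp add: algebra_simps)
  next
    case False
    have e1: "act p q Lt (bs, N) = (bs @ [(nat r, True)], m * int p)"
      using False unfolding m_def r_def by auto
    have e2: "fold (act p q) (replicate p La) (bs @ [(nat r, True)], m * int p) = (bs @ [(nat r, True)], (m+1) * int p)"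
      by (simp add: act_fold_La algebra_simps)
    have md: "((m+1) * int p) mod int p = 0" "((m+1) * int p) div int p = m+1" using pq_pos' by auto
    have e3: "act p q LtInv (bs @ [(nat r, True)], (m+1) * int p) = (bs, int (nat r) + (m+1) * int q)"
      by (simp only: act.simps md) simp
    show ?thesis unfolding L R e1 e2 e3 using Nd r0 by (simp add: algebra_simps)
  qed
qed

lemma fold_valid: "valid_st p q (fst s) \<Longrightarrow> valid_st p q (fst (fold (act p q) x s))"
proof (induction x arbitrary: s)
  case Nil then show ?case by simp
next
  case (Cons g x)
  obtain bs N where s: "s = (bs, N)" by (cases s)
  have "valid_st p q (fst (act p q g s))" using act_valid[OF p1 pq] Cons.prems s by simp
  then show ?case using Cons.IH by simp
qed

lemma rule_fold: "(l, r) \<in> bs_rules p q \<Longrightarrow> valid_st p q (fst s) \<Longrightarrow> fold (act p q) l s = fold (act p q) r s"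
proof -
  assume lr: "(l, r) \<in> bs_rules p q" and v: "valid_st p q (fst s)"
  obtain bs N where s: "s = (bs, N)" by (cases s)
  from lr consider g where "l = [g, inv_letter g]" "r = []"
    | "l = [Lt] @ replicate p La @ [LtInv]" "r = replicate q La"
    unfolding bs_rules_def by blast
  then show ?thesis
  proof cases
    case 1 then show ?thesis using act_inv[OF p1 pq] v s by simp
  next
    case 2 then show ?thesis using act_rel v s by simp
  qed
qed

lemma step_fold: "bs_step p q u v \<Longrightarrow> fold (act p q) u ([], 0) = fold (act p q) v ([], 0)"
proof -
  assume "bs_step p q u v"
  then obtain x y l r where h: "(l, r) \<in> bs_rules p q" "u = x @ l @ y" "v = x @ r @ y"
    unfolding bs_step_def by blast
  have v: "valid_st p q (fst (fold (act p q) x ([], 0)))" by (rule fold_valid) simp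
  show ?thesis using rule_fold[OF h(1) v] h by simp
qed

lemma eq_fold: "bs_eq p q u v \<Longrightarrow> fold (act p q) u ([], 0) = fold (act p q) v ([], 0)"
  unfolding bs_eq_def
proof (induction rule: equivclp_induct)
  case base then show ?case by simp
next
  case (step y z)
  then show ?case using step_fold by metis
qed

end



declare fold_replicate[simp del]

abbreviation FR :: "word \<Rightarrow> bool" where "FR \<equiv> successively (\<lambda>x y. y \<noteq> inv_letter x)"

lemma fr_succ: "freely_reduced w \<longleftrightarrow> FR w"
  unfolding freely_reduced_def successively_conv_nth by blast

definition tlet :: "nat \<times> bool \<Rightarrow> letter" where "tlet b = (if snd b then Lt else LtInv)"

lemma block_word_alt: "block_word b = replicate (fst b) La @ [tlet b]"
  by (simp add: block_word_def tlet_def)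

lemma FR_block: "FR (block_word b)"
proof -
  have "x \<noteq> LaInv \<Longrightarrow> FR (replicate k La @ [x])" for k x
  proof (induction k)
    case 0 then show ?case by simp
  next
    case (Suc k)
    have "hd (replicate k La @ [x]) \<noteq> LaInv" using Suc.prems by (cases k) auto
    then show ?case using Suc by (simp add: successively_Cons)
  qed
  moreover have "tlet b \<noteq> LaInv" by (simp add: tlet_def)
  ultimately show ?thesis by (simp add: block_word_alt)
qed

lemma bw_nonempty: "block_word b \<noteq> []" by (simp add: block_word_def)

lemma concat_bw_Nil: "concat (map block_word bs) = [] \<longleftrightarrow> bs = []"
  by (induction bs) (auto simp: block_word_def)

lemma last_bw: "bs \<noteq> [] \<Longrightarrow> last (concat (map block_word bs)) = tlet (last bs)"
  by (induction bs rule: rev_induct) (auto simp: block_word_alt)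

lemma hd_bw: "hd (block_word b) = (if fst b = 0 then tlet b else La)"
  by (cases "fst b") (auto simp: block_word_alt)

lemma FR_bw: "FR (concat (map block_word bs)) \<longleftrightarrow> successively Rb bs"
proof (induction bs rule: rev_induct)
  case Nil then show ?case by simp
next
  case (snoc b bs)
  define A where "A = concat (map block_word bs)"
  have cA: "concat (map block_word (bs @ [b])) = A @ block_word b" by (simp add: A_def)
  have "FR (concat (map block_word (bs @ [b]))) \<longleftrightarrow>
     FR (concat (map block_word bs)) \<and> (bs = [] \<or> hd (block_word b) \<noteq> inv_letter (tlet (last bs)))"
  proof (cases "bs = []")
    case True then show ?thesis using FR_block[of b] by simp
  next
    case False
    have "A \<noteq> []" "last A = tlet (last bs)" using False concat_bw_Nil last_bw unfolding A_def by auto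
    then show ?thesis unfolding cA successively_append_iff A_def[symmetric] using FR_block[of b] bw_nonempty[of b] False
      by simp
  qed
  also have "\<dots> \<longleftrightarrow> successively Rb (bs @ [b])"
    using snoc.IH by (auto simp: successively_append_iff hd_bw tlet_def Rb_def)
  finally show ?case .
qed

definition wd :: "state \<Rightarrow> word" where "wd s = concat (map block_word (fst s)) @ apow (snd s)"

context
  fixes p q :: nat
  assumes p1: "1 \<le> p" and pq: "p < q"
begin

lemma pq_pos'': "(0::int) < int p" "(0::int) < int q" using p1 pq by auto

lemma fold_bw: "valid_st p q bs \<Longrightarrow> fold (act p q) (concat (map block_word bs)) ([], 0) = (bs, 0)"
proof (induction bs rule: rev_induct)
  case Nil then show ?case by simp
next
  case (snoc b bs)
  obtain k d where b: "b = (k, d)" by (cases b)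
  have v: "valid_st p q bs" "valid_block p q b" "bs = [] \<or> Rb (last bs) b"
    using snoc.prems valid_snoc by auto
  have "fold (act p q) (concat (map block_word (bs @ [b]))) ([], 0)
     = fold (act p q) (block_word b) (bs, 0)" using snoc.IH v by simp
  also have "\<dots> = act p q (tlet b) (bs, int k)"
    by (simp add: block_word_alt b act_fold_La)
  also have "\<dots> = (bs @ [b], 0)"
  proof (cases d)
    case True
    have kq: "int k < int q" using v(2) b True by (simp add: valid_block_def)
    have md: "int k mod int q = int k" "int k div int q = 0" using kq by auto
    have cond: "(int k = 0 \<and> bs \<noteq> [] \<and> \<not> snd (last bs)) = False"
      using v(3) b True by (auto simp: Rb_def)
    show ?thesis unfolding tlet_def b using True
      by (simp only: act.simps md cond if_False nat_int snd_conv if_True) simp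
  next
    case False
    have kq: "int k < int p" using v(2) b False by (simp add: valid_block_def)
    have md: "int k mod int p = int k" "int k div int p = 0" using kq by auto
    have cond: "(int k = 0 \<and> bs \<noteq> [] \<and> snd (last bs)) = False"
      using v(3) b False by (auto simp: Rb_def)
    show ?thesis unfolding tlet_def b using False
      by (simp only: act.simps md cond if_False nat_int snd_conv) simp
  qed
  finally show ?case .
qed

lemma fold_nf: "valid_st p q bs \<Longrightarrow> fold (act p q) (concat (map block_word bs) @ apow N) ([], 0) = (bs, N)"
  using fold_bw fold_apow[of p q N bs 0] by simp

lemma nf_valid: "nf_word p q w \<Longrightarrow> \<exists>bs. valid_st p q bs \<and> w = concat (map block_word bs)"
  unfolding nf_word_def valid_st_def fr_succ using FR_bw by blast

lemma wd_step: "valid_st p q (fst s) \<Longrightarrow> bs_eq p q (wd s @ [g]) (wd (act p q g s))"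
proof -
  assume v: "valid_st p q (fst s)"
  obtain bs N where s: "s = (bs, N)" by (cases s)
  define B where "B = concat (map block_word bs)"
  show ?thesis
  proof (cases g)
    case La
    then show ?thesis using s bs_eq_cons[OF apow_snoc_La[of p q N], of B] by (simp add: wd_def B_def)
  next
    case LaInv
    then show ?thesis using s bs_eq_cons[OF apow_snoc_LaInv[of p q N], of B] by (simp add: wd_def B_def)
  next
    case Lt
    define m where "m = N div int q"
    define r where "r = N mod int q"
    have Nd: "N = r + m * int q" unfolding m_def r_def by simp
    have r0: "0 \<le> r" "r < int q" unfolding r_def using pq_pos'' by auto
    show ?thesis
    proof (cases "r = 0 \<and> bs \<noteq> [] \<and> \<not> snd (last bs)")
      case True
      from True obtain bs' b where bs0: "bs = bs' @ [b]" by (cases bs rule: rev_exhaust) auto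
      obtain k where bs: "bs = bs' @ [(k, False)]" using bs0 True by (cases b) auto
      define B' where "B' = concat (map block_word bs')"
      have e1: "act p q g s = (bs', int k + m * int p)"
        using True bs Lt s unfolding m_def r_def by simp
      have "wd s @ [g] = (B' @ replicate k La @ [LtInv]) @ apow (m * int q) @ [Lt]"
        using s bs Lt Nd True by (simp add: wd_def B'_def block_word_def)
      also have "bs_eq p q \<dots> ((B' @ replicate k La @ [LtInv]) @ [Lt] @ apow (m * int p))"
        by (rule bs_eq_cons[OF comm_t])
      also have "\<dots> = (B' @ replicate k La) @ [LtInv, inv_letter LtInv] @ apow (m * int p)" by simp
      also have "bs_eq p q \<dots> ((B' @ replicate k La) @ [] @ apow (m * int p))"
        by (rule bs_eq_ctx[OF bs_eq_cancel])
      also have "\<dots> = B' @ apow (int k) @ apow (m * int p)" by (simp add: apow_nat)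
      also have "bs_eq p q \<dots> (B' @ apow (int k + m * int p))"
        by (rule bs_eq_cons[OF apow_add])
      also have "\<dots> = wd (act p q g s)" using e1 by (simp add: wd_def B'_def)
      finally show ?thesis .
    next
      case False
      have e1: "act p q g s = (bs @ [(nat r, True)], m * int p)"
        using False Lt s unfolding m_def r_def by auto
      have "wd s @ [g] = B @ apow (r + m * int q) @ [Lt]"
        using s Lt Nd by (simp add: wd_def B_def)
      also have "bs_eq p q \<dots> (B @ (apow r @ apow (m * int q)) @ [Lt])"
        by (rule bs_eq_ctx[OF bs_eq_sym[OF apow_add]])
      also have "\<dots> = (B @ apow r) @ (apow (m * int q) @ [Lt])" by simp
      also have "bs_eq p q \<dots> ((B @ apow r) @ ([Lt] @ apow (m * int p)))"
        by (rule bs_eq_cons[OF comm_t])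
      also have "\<dots> = wd (act p q g s)"
      proof -
        have "apow r = replicate (nat r) La" using r0 by (simp add: apow_def)
        then show ?thesis using e1 by (simp add: wd_def B_def block_word_def)
      qed
      finally show ?thesis .
    qed
  next
    case LtInv
    define m where "m = N div int p"
    define r where "r = N mod int p"
    have Nd: "N = r + m * int p" unfolding m_def r_def by simp
    have r0: "0 \<le> r" "r < int p" unfolding r_def using pq_pos'' by auto
    show ?thesis
    proof (cases "r = 0 \<and> bs \<noteq> [] \<and> snd (last bs)")
      case True
      from True obtain bs' b where bs0: "bs = bs' @ [b]" by (cases bs rule: rev_exhaust) auto
      obtain k where bs: "bs = bs' @ [(k, True)]" using bs0 True by (cases b) auto
      define B' where "B' = concat (map block_word bs')"
      have e1: "act p q g s = (bs', int k + m * int q)"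
        using True bs LtInv s unfolding m_def r_def by simp
      have "wd s @ [g] = (B' @ replicate k La @ [Lt]) @ apow (m * int p) @ [LtInv]"
        using s bs LtInv Nd True by (simp add: wd_def B'_def block_word_def)
      also have "bs_eq p q \<dots> ((B' @ replicate k La @ [Lt]) @ [LtInv] @ apow (m * int q))"
        by (rule bs_eq_cons[OF comm_tinv])
      also have "\<dots> = (B' @ replicate k La) @ [Lt, inv_letter Lt] @ apow (m * int q)" by simp
      also have "bs_eq p q \<dots> ((B' @ replicate k La) @ [] @ apow (m * int q))"
        by (rule bs_eq_ctx[OF bs_eq_cancel])
      also have "\<dots> = B' @ apow (int k) @ apow (m * int q)" by (simp add: apow_nat)
      also have "bs_eq p q \<dots> (B' @ apow (int k + m * int q))"
        by (rule bs_eq_cons[OF apow_add])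
      also have "\<dots> = wd (act p q g s)" using e1 by (simp add: wd_def B'_def)
      finally show ?thesis .
    next
      case False
      have e1: "act p q g s = (bs @ [(nat r, False)], m * int q)"
        using False LtInv s unfolding m_def r_def by auto
      have "wd s @ [g] = B @ apow (r + m * int p) @ [LtInv]"
        using s LtInv Nd by (simp add: wd_def B_def)
      also have "bs_eq p q \<dots> (B @ (apow r @ apow (m * int p)) @ [LtInv])"
        by (rule bs_eq_ctx[OF bs_eq_sym[OF apow_add]])
      also have "\<dots> = (B @ apow r) @ (apow (m * int p) @ [LtInv])" by simp
      also have "bs_eq p q \<dots> ((B @ apow r) @ ([LtInv] @ apow (m * int q)))"
        by (rule bs_eq_cons[OF comm_tinv])
      also have "\<dots> = wd (act p q g s)"
      proof -
        have "apow r = replicate (nat r) La" using r0 by (simp add: apow_def)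
        then show ?thesis using e1 by (simp add: wd_def B_def block_word_def)
      qed
      finally show ?thesis .
    qed
  qed
qed

lemma word_wd: "bs_eq p q u (wd (fold (act p q) u ([], 0)))"
proof (induction u rule: rev_induct)
  case Nil then show ?case by (simp add: wd_def apow_def)
next
  case (snoc g u)
  have v: "valid_st p q (fst (fold (act p q) u ([], 0)))" by (rule fold_valid[OF p1 pq]) simp
  have "bs_eq p q (u @ [g]) (wd (fold (act p q) u ([], 0)) @ [g])" by (rule bs_eq_snoc[OF snoc.IH])
  also have "bs_eq p q \<dots> (wd (act p q g (fold (act p q) u ([], 0))))" by (rule wd_step[OF v])
  finally show ?case by simp
qed

lemma part1: "\<exists>!(w, N). nf_word p q w \<and> bs_eq p q u (w @ apow N)"
proof -
  obtain bs N where s: "fold (act p q) u ([], 0) = (bs, N)" by (cases "fold (act p q) u ([], 0)")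
  have v: "valid_st p q bs" using fold_valid[OF p1 pq, of "([], 0)" u] s by simp
  have nf: "nf_word p q (concat (map block_word bs))"
    using v FR_bw unfolding nf_word_def valid_st_def fr_succ by blast
  have eq: "bs_eq p q u (concat (map block_word bs) @ apow N)"
    using word_wd[of u] unfolding s wd_def by simp
  show ?thesis
  proof (rule ex1I[of _ "(concat (map block_word bs), N)"])
    show "case (concat (map block_word bs), N) of (w, N) \<Rightarrow> nf_word p q w \<and> bs_eq p q u (w @ apow N)"
      using nf eq by simp
  next
    fix x assume x: "case x of (w, N) \<Rightarrow> nf_word p q w \<and> bs_eq p q u (w @ apow N)"
    obtain w' N' where x': "x = (w', N')" by (cases x)
    have h: "nf_word p q w'" "bs_eq p q u (w' @ apow N')" using x x' by auto
    obtain bs' where bs': "valid_st p q bs'" "w' = concat (map block_word bs')" using nf_valid h(1) by blast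
    have "fold (act p q) u ([], 0) = fold (act p q) (w' @ apow N') ([], 0)" by (rule eq_fold[OF p1 pq h(2)])
    also have "\<dots> = (bs', N')" using fold_nf bs' by simp
    finally show "x = (concat (map block_word bs), N)" using s x' bs' by simp
  qed
qed

end



declare fold_replicate[simp del]

lemma abs_div_le: "0 < (P::int) \<Longrightarrow> \<bar>N div P\<bar> \<le> \<bar>N\<bar>"
  by (smt (verit) div_by_1 pos_imp_zdiv_neg_iff zdiv_mono2 zdiv_mono2_neg)

lemma aux_lin: "0 \<le> (Q::int) \<Longrightarrow> \<bar>N\<bar> + 2 \<le> (Q + 2) * (\<bar>N\<bar> + 1)"
proof -
  assume "0 \<le> Q"
  then have "0 \<le> Q * (\<bar>N\<bar> + 1)" by simp
  then show ?thesis by (simp add: algebra_simps)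
qed

context
  fixes p q :: nat
  assumes p1: "1 \<le> p" and pq: "p < q"
begin

lemma pqp: "(0::int) < int p" "(0::int) < int q" using p1 pq by auto

lemma act_bound:
  assumes v: "valid_st p q bs"
  shows "length (fst (act p q g (bs, N))) \<le> length bs + 1
       \<and> \<bar>snd (act p q g (bs, N))\<bar> + 1 \<le> (int q + 2) * (\<bar>N\<bar> + 1)"
proof (cases g)
  case La
  have "\<bar>N + 1\<bar> + 1 \<le> \<bar>N\<bar> + 2" by arith
  then show ?thesis using La aux_lin[of "int q" N] by simp
next
  case LaInv
  have "\<bar>N - 1\<bar> + 1 \<le> \<bar>N\<bar> + 2" by arith
  then show ?thesis using LaInv aux_lin[of "int q" N] by simp
next
  case Lt
  have d: "\<bar>N div int q\<bar> \<le> \<bar>N\<bar>" by (rule abs_div_le[OF pqp(2)])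
  have m: "\<bar>N div int q * int p\<bar> \<le> \<bar>N\<bar> * int q"
  proof -
    have "\<bar>N div int q * int p\<bar> = \<bar>N div int q\<bar> * int p" by (simp add: abs_mult)
    also have "\<dots> \<le> \<bar>N\<bar> * int q" using d pq by (intro mult_mono) auto
    finally show ?thesis .
  qed
  show ?thesis
  proof (cases "N mod int q = 0 \<and> bs \<noteq> [] \<and> \<not> snd (last bs)")
    case True
    from True obtain bs' b where bs0: "bs = bs' @ [b]" by (cases bs rule: rev_exhaust) auto
    have k: "fst b < q" using v bs0 True pq by (auto simp: valid_snoc valid_block_def split: if_splits)
    have e: "act p q g (bs, N) = (bs', int (fst b) + N div int q * int p)" using True Lt bs0 by simp
    have "\<bar>int (fst b) + N div int q * int p\<bar> + 1 \<le> int q + \<bar>N\<bar> * int q + 1" using k m by linarith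
    also have "\<dots> \<le> (int q + 2) * (\<bar>N\<bar> + 1)" by (simp add: algebra_simps)
    finally show ?thesis using e bs0 by simp
  next
    case False
    have e: "act p q g (bs, N) = (bs @ [(nat (N mod int q), True)], N div int q * int p)" using False Lt by auto
    have "\<bar>N div int q * int p\<bar> + 1 \<le> (int q + 2) * (\<bar>N\<bar> + 1)" using m by (simp add: algebra_simps)
    then show ?thesis using e by simp
  qed
next
  case LtInv
  have d: "\<bar>N div int p\<bar> \<le> \<bar>N\<bar>" by (rule abs_div_le[OF pqp(1)])
  have m: "\<bar>N div int p * int q\<bar> \<le> \<bar>N\<bar> * int q"
  proof -
    have "\<bar>N div int p * int q\<bar> = \<bar>N div int p\<bar> * int q" by (simp add: abs_mult)
    also have "\<dots> \<le> \<bar>N\<bar> * int q" using d by (intro mult_mono) auto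
    finally show ?thesis .
  qed
  show ?thesis
  proof (cases "N mod int p = 0 \<and> bs \<noteq> [] \<and> snd (last bs)")
    case True
    from True obtain bs' b where bs0: "bs = bs' @ [b]" by (cases bs rule: rev_exhaust) auto
    have k: "fst b < q" using v bs0 True pq by (auto simp: valid_snoc valid_block_def split: if_splits)
    have e: "act p q g (bs, N) = (bs', int (fst b) + N div int p * int q)" using True LtInv bs0 by simp
    have "\<bar>int (fst b) + N div int p * int q\<bar> + 1 \<le> int q + \<bar>N\<bar> * int q + 1" using k m by linarith
    also have "\<dots> \<le> (int q + 2) * (\<bar>N\<bar> + 1)" by (simp add: algebra_simps)
    finally show ?thesis using e bs0 by simp
  next
    case False
    have e: "act p q g (bs, N) = (bs @ [(nat (N mod int p), False)], N div int p * int q)" using False LtInv by auto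
    have "\<bar>N div int p * int q\<bar> + 1 \<le> (int q + 2) * (\<bar>N\<bar> + 1)" using m by (simp add: algebra_simps)
    then show ?thesis using e by simp
  qed
qed

lemma fold_bound:
  "length (fst (fold (act p q) v ([], 0))) \<le> length v
   \<and> \<bar>snd (fold (act p q) v ([], 0))\<bar> + 1 \<le> (int q + 2) ^ length v"
proof (induction v rule: rev_induct)
  case Nil then show ?case by simp
next
  case (snoc g v)
  obtain bs N where s: "fold (act p q) v ([], 0) = (bs, N)" by (cases "fold (act p q) v ([], 0)")
  have v: "valid_st p q bs" using fold_valid[OF p1 pq, of "([], 0)" v] s by simp
  have ab: "length (fst (act p q g (bs, N))) \<le> length bs + 1"
     "\<bar>snd (act p q g (bs, N))\<bar> + 1 \<le> (int q + 2) * (\<bar>N\<bar> + 1)" using act_bound[OF v] by auto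
  have ih: "length bs \<le> length v" "\<bar>N\<bar> + 1 \<le> (int q + 2) ^ length v" using snoc s by auto
  have "(int q + 2) * (\<bar>N\<bar> + 1) \<le> (int q + 2) * (int q + 2) ^ length v"
    using ih(2) by (intro mult_left_mono) auto
  moreover have "(int q + 2) ^ length (v @ [g]) = (int q + 2) * (int q + 2) ^ length v" by simp
  ultimately have "\<bar>snd (act p q g (bs, N))\<bar> + 1 \<le> (int q + 2) ^ length (v @ [g])" using ab(2) by linarith
  moreover have "length (fst (act p q g (bs, N))) \<le> length (v @ [g])" using ab(1) ih(1) by simp
  ultimately show ?case using s by simp
qed

lemma length_bw: "\<forall>b\<in>set bs. valid_block p q b \<Longrightarrow> length (concat (map block_word bs)) \<le> q * length bs"
proof (induction bs)
  case Nil then show ?case by simp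
next
  case (Cons b bs)
  have "fst b < q" using Cons.prems pq by (auto simp: valid_block_def split: if_splits)
  then have "length (block_word b) \<le> q" by (simp add: block_word_def)
  then show ?case using Cons by simp
qed

end



declare fold_replicate[simp del]

function cmp :: "nat \<Rightarrow> nat \<Rightarrow> letter \<Rightarrow> nat \<Rightarrow> word" where
  "cmp p q x n = (if n < q \<or> q \<le> p \<or> p = 0 then replicate n x
     else [Lt] @ cmp p q x (n div q * p) @ [LtInv] @ replicate (n mod q) x)"
  by pat_completeness auto
termination
proof (relation "measure (\<lambda>(p, q, x, n). n)")
  show "wf (measure (\<lambda>(p, q, x, n). n))" by simp
next
  fix p q n :: nat and x :: letter
  assume h: "\<not> (n < q \<or> q \<le> p \<or> p = 0)"
  have "0 < n div q" using h by (simp add: div_greater_zero_iff)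
  then have "n div q * p < n div q * q" using h by simp
  also have "\<dots> \<le> n" by simp
  finally show "((p, q, x, n div q * p), p, q, x, n) \<in> measure (\<lambda>(p, q, x, n). n)" by simp
qed

declare cmp.simps[simp del]

definition sg :: "letter \<Rightarrow> int" where "sg x = (if x = La then 1 else -1)"

lemma rep_apow: "x = La \<or> x = LaInv \<Longrightarrow> replicate n x = apow (sg x * int n)"
  by (auto simp: sg_def apow_nat apow_neg_nat)

lemma nat_ineq: "1 \<le> (d::nat) \<Longrightarrow> p < q \<Longrightarrow> (d*p+1)*(q+1) \<le> (d*q+r+1)*(p+1)"
proof -
  assume d: "1 \<le> d" and pq: "p < q"
  obtain e where e: "d = e + 1" using d by (metis add.commute le_Suc_ex plus_1_eq_Suc)
  have "e * p \<le> e * q" using pq by simp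
  then have h2: "d*p + q \<le> d*q + p" unfolding e by (simp add: algebra_simps)
  have e1: "(d*p+1)*(q+1) = d*p*q + (d*p + q) + 1" by (simp add: algebra_simps)
  have e2: "(d*q+1)*(p+1) = d*p*q + (d*q + p) + 1" by (simp add: algebra_simps)
  have "(d*p+1)*(q+1) \<le> (d*q+1)*(p+1)" unfolding e1 e2 using h2 by linarith
  also have "\<dots> \<le> (d*q+r+1)*(p+1)" by (intro mult_le_mono1) simp
  finally show ?thesis .
qed

definition Kc :: "nat \<Rightarrow> nat \<Rightarrow> real" where
  "Kc p q = (real q + 1) / ln ((real q + 1) / (real p + 1))"

context
  fixes p q :: nat
  assumes p1: "1 \<le> p" and pq: "p < q"
begin

lemma cpos: "0 < ln ((real q + 1) / (real p + 1))" using pq by simp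

lemma Kpos: "0 < Kc p q" unfolding Kc_def using cpos by simp

lemma cmp_eq: "x = La \<or> x = LaInv \<Longrightarrow> bs_eq p q (replicate n x) (cmp p q x n)"
proof (induction n rule: less_induct)
  case (less n)
  show ?case
  proof (cases "n < q")
    case True then show ?thesis by (simp add: cmp.simps)
  next
    case False
    define d where "d = n div q"
    define r where "r = n mod q"
    have nd: "n = d * q + r" unfolding d_def r_def by simp
    have dpos: "0 < d" using False pq unfolding d_def by (simp add: div_greater_zero_iff)
    have lt: "d * p < n" using dpos pq nd
      by (metis add.commute less_add_same_cancel2 mult_less_cancel1 nat_neq_iff trans_less_add2 zero_less_iff_neq_zero)
    have c: "cmp p q x n = [Lt] @ cmp p q x (d * p) @ [LtInv] @ replicate r x"
      using False pq p1 unfolding d_def r_def by (simp add: cmp.simps)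
    define m where "m = sg x * int d"
    have a1: "replicate n x = apow (m * int q + sg x * int r)"
      using rep_apow[OF less.prems, of n] nd unfolding m_def by (simp add: algebra_simps)
    have "bs_eq p q (replicate n x) (apow (m * int q) @ apow (sg x * int r))"
      unfolding a1 by (rule bs_eq_sym[OF apow_add])
    also have "bs_eq p q \<dots> ((apow (m * int q) @ [Lt, inv_letter Lt]) @ apow (sg x * int r))"
      using bs_eq_ctx[OF bs_eq_sym[OF bs_eq_cancel[of p q Lt]], of "apow (m * int q)" "apow (sg x * int r)"]
      by simp
    also have "\<dots> = (apow (m * int q) @ [Lt]) @ [LtInv] @ apow (sg x * int r)" by simp
    also have "bs_eq p q \<dots> (([Lt] @ apow (m * int p)) @ [LtInv] @ apow (sg x * int r))"
      by (rule bs_eq_snoc[OF comm_t])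
    also have "\<dots> = [Lt] @ replicate (d * p) x @ [LtInv] @ replicate r x"
      using rep_apow[OF less.prems, of "d * p"] rep_apow[OF less.prems, of r] unfolding m_def
      by (simp add: algebra_simps)
    also have "bs_eq p q \<dots> ([Lt] @ cmp p q x (d * p) @ ([LtInv] @ replicate r x))"
      by (rule bs_eq_ctx[OF less.IH[OF lt less.prems]])
    finally show ?thesis using c by simp
  qed
qed

lemma cmp_len: "real (length (cmp p q x n)) \<le> Kc p q * ln (real n + 1) + real q"
proof (induction n rule: less_induct)
  case (less n)
  show ?case
  proof (cases "n < q")
    case True
    have "0 \<le> Kc p q * ln (real n + 1)" using Kpos by simp
    then show ?thesis using True by (simp add: cmp.simps)
  next
    case False
    define d where "d = n div q"
    define r where "r = n mod q"
    have nd: "n = d * q + r" unfolding d_def r_def by simp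
    have dpos: "1 \<le> d" using False pq unfolding d_def by (simp add: Suc_le_eq div_greater_zero_iff)
    have rq: "r < q" unfolding r_def using pq by simp
    have lt: "d * p < n" using dpos pq nd
      by (metis add.commute less_add_same_cancel2 mult_less_cancel1 nat_neq_iff trans_less_add2 zero_less_iff_neq_zero le_numeral_extra(2) not_one_le_zero)
    have c: "cmp p q x n = [Lt] @ cmp p q x (d * p) @ [LtInv] @ replicate r x"
      using False pq p1 unfolding d_def r_def by (simp add: cmp.simps)
    have len: "real (length (cmp p q x n)) = real (length (cmp p q x (d*p))) + 2 + real r"
      unfolding c by simp
    define c0 where "c0 = ln ((real q + 1) / (real p + 1))"
    have c0p: "0 < c0" unfolding c0_def using cpos .
    have Kc0: "Kc p q * c0 = real q + 1" unfolding Kc_def c0_def using cpos by simp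
    have ni: "(d*p+1)*(q+1) \<le> (d*q+r+1)*(p+1)" by (rule nat_ineq[OF dpos pq])
    have ni': "(real (d*p) + 1) * ((real q + 1) / (real p + 1)) \<le> real n + 1"
    proof -
      have "(real (d*p) + 1) * (real q + 1) \<le> (real n + 1) * (real p + 1)"
        using ni unfolding nd by (metis (mono_tags) of_nat_1 of_nat_add of_nat_le_iff of_nat_mult)
      then show ?thesis by (simp add: field_simps)
    qed
    have pos1: "0 < real (d*p) + 1" using of_nat_0_le_iff[of "d*p"] by linarith
    have pos2: "0 < (real q + 1) / (real p + 1)" by simp
    have lnineq: "ln (real (d*p) + 1) + c0 \<le> ln (real n + 1)"
    proof -
      have "ln (real (d*p) + 1) + c0 = ln ((real (d*p) + 1) * ((real q + 1) / (real p + 1)))"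
        using ln_mult_pos[OF pos1 pos2] unfolding c0_def by simp
      also have "\<dots> \<le> ln (real n + 1)" by (rule ln_mono[OF ni' mult_pos_pos[OF pos1 pos2]])
      finally show ?thesis .
    qed
    have "real (length (cmp p q x n)) \<le> Kc p q * ln (real (d*p) + 1) + real q + 2 + real r"
      using len less.IH[OF lt] by simp
    also have "\<dots> \<le> Kc p q * ln (real (d*p) + 1) + (real q + 1) + real q"
      using rq by simp
    also have "\<dots> = Kc p q * (ln (real (d*p) + 1) + c0) + real q"
      using Kc0 by (simp add: algebra_simps)
    also have "\<dots> \<le> Kc p q * ln (real n + 1) + real q"
      using lnineq Kpos by simp
    finally show ?thesis .
  qed
qed

end



declare fold_replicate[simp del]

theorem theorem3p2:
  fixes p q :: nat
  assumes "1 \<le> p" and "p < q"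
  shows "(\<forall>u. \<exists>!(w, N). nf_word p q w \<and> bs_eq p q u (w @ apow N))
       \<and> (\<exists>C1 C2 D1 D2 :: real. C1 > 0 \<and> C2 > 0 \<and> D1 > 0 \<and> D2 > 0 \<and>
            (\<forall>u w N. nf_word p q w \<and> bs_eq p q u (w @ apow N) \<longrightarrow>
               C1 * (real (length w) + ln (real_of_int \<bar>N\<bar> + 1)) - D1 \<le> real (bs_norm p q u)
             \<and> real (bs_norm p q u) \<le> C2 * (real (length w) + ln (real_of_int \<bar>N\<bar> + 1)) + D2))"
proof -
  have P1: "\<forall>u. \<exists>!(w, N). nf_word p q w \<and> bs_eq p q u (w @ apow N)" using part1[OF assms] by blast
  define A where "A = real q + ln (real q + 2)"
  have Apos: "0 < A" unfolding A_def using assms by (simp add: add_pos_pos)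
  define C1 where "C1 = 1 / A"
  define C2 where "C2 = max 1 (Kc p q)"
  define D1 :: real where "D1 = 1"
  define D2 where "D2 = real q"
  have bounds: "\<forall>u w N. nf_word p q w \<and> bs_eq p q u (w @ apow N) \<longrightarrow>
               C1 * (real (length w) + ln (real_of_int \<bar>N\<bar> + 1)) - D1 \<le> real (bs_norm p q u)
             \<and> real (bs_norm p q u) \<le> C2 * (real (length w) + ln (real_of_int \<bar>N\<bar> + 1)) + D2"
  proof (intro allI impI)
    fix u w N assume h: "nf_word p q w \<and> bs_eq p q u (w @ apow N)"
    obtain bs where bs: "valid_st p q bs" "w = concat (map block_word bs)"
      using nf_valid[OF assms] h by blast
    have ex: "\<exists>n v. length v = n \<and> bs_eq p q u v"
      by (rule exI[of _ "length u"], rule exI[of _ u]) simp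
    obtain v where v: "length v = bs_norm p q u" "bs_eq p q u v"
      using LeastI_ex[OF ex] unfolding bs_norm_def by blast
    have norm_le: "bs_norm p q u \<le> length v'" if "bs_eq p q u v'" for v'
      unfolding bs_norm_def by (rule Least_le) (use that in blast)
    define L where "L = bs_norm p q u"
    have "fold (act p q) v ([], 0) = fold (act p q) u ([], 0)"
      by (rule eq_fold[OF assms bs_eq_sym[OF v(2)]])
    also have "\<dots> = fold (act p q) (w @ apow N) ([], 0)"
      using eq_fold[OF assms] h by blast
    also have "\<dots> = (bs, N)" using fold_nf[OF assms bs(1)] bs(2) by simp
    finally have f1: "fold (act p q) v ([], 0) = (bs, N)" .
    have fb: "length bs \<le> L" "\<bar>N\<bar> + 1 \<le> (int q + 2) ^ L"
      using fold_bound[OF assms, of v] f1 v(1) unfolding L_def by auto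
    have "length w \<le> q * length bs"
      using length_bw[OF assms, of bs] bs unfolding valid_st_def by simp
    also have "\<dots> \<le> q * L" using fb(1) by simp
    finally have lw: "real (length w) \<le> real q * real L" by (metis of_nat_le_iff of_nat_mult)
    have lnb: "ln (real_of_int \<bar>N\<bar> + 1) \<le> real L * ln (real q + 2)"
    proof -
      have "real_of_int (\<bar>N\<bar> + 1) \<le> real_of_int ((int q + 2) ^ L)" using fb(2) by (rule of_int_le_iff[THEN iffD2])
      then have "real_of_int \<bar>N\<bar> + 1 \<le> (real q + 2) ^ L" by simp
      then have "ln (real_of_int \<bar>N\<bar> + 1) \<le> ln ((real q + 2) ^ L)"
        by (rule ln_mono) (simp add: add_nonneg_pos)
      also have "\<dots> = real L * ln (real q + 2)" by (simp add: ln_realpow)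
      finally show ?thesis .
    qed
    have sum: "real (length w) + ln (real_of_int \<bar>N\<bar> + 1) \<le> A * real L"
      using lw lnb unfolding A_def by (simp add: algebra_simps)
    have lower: "C1 * (real (length w) + ln (real_of_int \<bar>N\<bar> + 1)) - D1 \<le> real L"
    proof -
      have "C1 * (real (length w) + ln (real_of_int \<bar>N\<bar> + 1)) \<le> C1 * (A * real L)"
        using sum Apos unfolding C1_def by (intro mult_left_mono) auto
      also have "\<dots> = real L" unfolding C1_def using Apos by simp
      finally show ?thesis unfolding D1_def by simp
    qed
    define x where "x = (if 0 \<le> N then La else LaInv)"
    define n where "n = nat \<bar>N\<bar>"
    have xx: "x = La \<or> x = LaInv" unfolding x_def by simp
    have an: "apow N = replicate n x" unfolding x_def n_def apow_def by simp
    have "bs_eq p q u (w @ replicate n x)" using h an by simp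
    also have "bs_eq p q \<dots> (w @ cmp p q x n)" by (rule bs_eq_cons[OF cmp_eq[OF assms xx]])
    finally have "bs_norm p q u \<le> length (w @ cmp p q x n)" by (rule norm_le)
    then have "real L \<le> real (length w) + real (length (cmp p q x n))" unfolding L_def by simp
    also have "\<dots> \<le> real (length w) + (Kc p q * ln (real n + 1) + real q)"
      using cmp_len[OF assms, of x n] by simp
    also have "real n = real_of_int \<bar>N\<bar>" unfolding n_def by simp
    finally have up1: "real L \<le> real (length w) + Kc p q * ln (real_of_int \<bar>N\<bar> + 1) + real q" by simp
    have lnpos: "0 \<le> ln (real_of_int \<bar>N\<bar> + 1)" by simp
    have "Kc p q * ln (real_of_int \<bar>N\<bar> + 1) \<le> C2 * ln (real_of_int \<bar>N\<bar> + 1)"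
      unfolding C2_def using lnpos by (intro mult_right_mono) auto
    moreover have "real (length w) \<le> C2 * real (length w)"
      unfolding C2_def by (simp add: mult_le_cancel_right1)
    ultimately have upper: "real L \<le> C2 * (real (length w) + ln (real_of_int \<bar>N\<bar> + 1)) + D2"
      using up1 unfolding D2_def by (simp add: algebra_simps)
    show "C1 * (real (length w) + ln (real_of_int \<bar>N\<bar> + 1)) - D1 \<le> real (bs_norm p q u)
             \<and> real (bs_norm p q u) \<le> C2 * (real (length w) + ln (real_of_int \<bar>N\<bar> + 1)) + D2"
      using lower upper unfolding L_def by simp
  qed
  have pos: "C1 > 0" "C2 > 0" "D1 > 0" "D2 > 0"
    unfolding C1_def C2_def D1_def D2_def using Apos assms by auto
  show ?thesis using P1 bounds pos by blast
qed


end
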